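(* Let $A(z)=\sum_{k=0}^{\infty}a_kz^k$ with $a_0\neq 0$ and $H(z)=\sum_{k=1}^{\infty}h_kz^k$ with $h_1\neq 0$ be analytic in a disk $|z|<R$ with $R>1$, with real coefficients. Let the Sheffer polynomials $p_k$ be defined by $A(t)e^{xH(t)}=\sum_{k=0}^{\infty}p_k(x)t^k$ for $|t|<R$, and assume $p_k(x)\ge 0$ for all $x\ge 0$ and all $k$, $A(1)\neq 0$ and $H'(1)=1$. Let $(b_n)$ be a positive increasing sequence with $b_n\to\infty$ and $b_n/n\to 0$, and define $$T_n^*(f;x)=\frac{e^{-\frac{n}{b_n}xH(1)}}{A(1)}\sum_{k=0}^{\infty}p_k\Big(\frac{n}{b_n}x\Big)f\Big(\frac{k}{n}b_n\Big).$$ Then for every $f\in C_E[0,\infty)$ and every $a>0$, $T_n^*(f;\cdot)\to f$ uniformly on $[0,a]$ as $n\to\infty$.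
   Context: $C_E[0,\infty)$ denotes the set of continuous functions $f$ on $[0,\infty)$ such that $|f(x)|\le \beta e^{\alpha x}$ for all $x\ge 0$, for some finite positive constants $\alpha,\beta$. *)

theory Defs
  imports "HOL-Analysis.Analysis"
begin

definition pser :: "(nat \<Rightarrow> real) \<Rightarrow> real \<Rightarrow> real" where
  "pser c t = (\<Sum>k. c k * t ^ k)"

definition CE :: "(real \<Rightarrow> real) set" where
  "CE = {f. continuous_on {0..} f \<and>
            (\<exists>\<alpha> \<beta>. 0 < \<alpha> \<and> 0 < \<beta> \<and> (\<forall>x\<ge>0. \<bar>f x\<bar> \<le> \<beta> * exp (\<alpha> * x)))}"

definition Tstar :: "(nat \<Rightarrow> real) \<Rightarrow> (nat \<Rightarrow> real) \<Rightarrow> (nat \<Rightarrow> real \<Rightarrow> real) \<Rightarrow> (nat \<Rightarrow> real)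
                     \<Rightarrow> nat \<Rightarrow> (real \<Rightarrow> real) \<Rightarrow> real \<Rightarrow> real" where
  "Tstar a h p b n f x =
     exp (- (real n / b n) * x * pser h 1) / pser a 1 *
     (\<Sum>k. p k (real n / b n * x) * f (real k / real n * b n))"

end

theory Submission
  imports Defs
begin

lemma exp_diff_bound:
  fixes a b :: real
  shows "\<bar>exp a - exp b\<bar> \<le> exp (max a b) * \<bar>a - b\<bar>"
proof -
  have key: "exp v - exp w \<le> exp v * (v - w)" if "w \<le> v" for v w :: real
  proof -
    have "1 + (w - v) \<le> exp (w - v)" by (rule exp_ge_add_one_self)
    hence "exp v * (1 + (w - v)) \<le> exp v * exp (w - v)" by simp
    also have "\<dots> = exp w" by (simp add: exp_diff)
    finally show ?thesis by (simp add: algebra_simps)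
  qed
  show ?thesis
  proof (cases "b \<le> a")
    case True
    with key[of b a] show ?thesis by (simp add: max_def abs_if)
  next
    case False
    with key[of a b] show ?thesis by (simp add: max_def abs_if)
  qed
qed

lemma L_conv:
  fixes A H :: "real \<Rightarrow> real" and s :: "nat \<Rightarrow> real" and c \<gamma> \<eta> :: real
  assumes Acont: "isCont A 1" and A1: "A 1 \<noteq> 0" and H': "(H has_real_derivative 1) (at 1)"
    and s0: "s \<longlonglongrightarrow> 0" and spos: "eventually (\<lambda>n. s n > 0) sequentially"
    and c: "c > 0" and eta: "\<eta> > 0"
  shows "eventually (\<lambda>n. \<forall>x\<in>{0..c}. \<bar>A (exp (\<gamma> * s n)) / A 1 * exp (x * ((H (exp (\<gamma> * s n)) - H 1) / s n)) - exp (\<gamma> * x)\<bar> < \<eta>) sequentially"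
proof -
  define q where "q n = (H (exp (\<gamma> * s n)) - H 1) / s n" for n
  define r where "r n = A (exp (\<gamma> * s n)) / A 1" for n
  have t1: "(\<lambda>n. exp (\<gamma> * s n)) \<longlonglongrightarrow> 1"
    using tendsto_exp[OF tendsto_mult[OF tendsto_const s0, of \<gamma>]] by simp
  have "(\<lambda>n. A (exp (\<gamma> * s n))) \<longlonglongrightarrow> A 1"
    using isCont_tendsto_compose[OF Acont t1] .
  hence rlim: "r \<longlonglongrightarrow> 1" unfolding r_def using A1
    using tendsto_divide[OF _ tendsto_const, of _ "A 1" sequentially "A 1"] by force
  have D: "((\<lambda>y. H (exp (\<gamma> * y))) has_real_derivative (1 * (exp (\<gamma> * 0) * \<gamma>))) (at 0)"
    apply (rule DERIV_chain2[where f=H])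
    using H' apply simp
    by (auto intro!: derivative_eq_intros)
  hence "((\<lambda>y. (H (exp (\<gamma> * y)) - H (exp (\<gamma> * 0))) / (y - 0)) \<longlongrightarrow> \<gamma>) (at 0)"
    unfolding has_field_derivative_iff by simp
  hence D2: "((\<lambda>y. (H (exp (\<gamma> * y)) - H 1) / y) \<longlongrightarrow> \<gamma>) (at 0)" by simp
  have sat: "filterlim s (at 0) sequentially"
    unfolding filterlim_at using s0 spos by (auto elim: eventually_mono)
  have qlim: "q \<longlonglongrightarrow> \<gamma>" unfolding q_def using filterlim_compose[OF D2 sat] .
  define M where "M = exp (c * (\<bar>\<gamma>\<bar> + 1))"
  have Mpos: "M > 0" unfolding M_def by simp
  define e1 where "e1 = min 1 (\<eta> / (2 * (M * c + 1)))"
  have "M * c + 1 > 0" using Mpos c by (simp add: add_pos_pos)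
  hence e1: "e1 > 0" unfolding e1_def using eta by auto
  have ev1: "eventually (\<lambda>n. \<bar>q n - \<gamma>\<bar> < e1) sequentially"
    using qlim e1 unfolding tendsto_iff dist_real_def by blast
  have ev2: "eventually (\<lambda>n. \<bar>r n - 1\<bar> < \<eta> / (2 * M)) sequentially"
    using rlim eta Mpos unfolding tendsto_iff dist_real_def by auto
  show ?thesis
    using ev1 ev2
  proof eventually_elim
    case (elim n)
    show ?case
    proof
      fix x assume x: "x \<in> {0..c}"
      let ?E = "exp (x * q n)" and ?e = "exp (\<gamma> * x)"
      have qb: "\<bar>q n\<bar> \<le> \<bar>\<gamma>\<bar> + 1" using elim e1_def by linarith
      have "x * q n \<le> c * (\<bar>\<gamma>\<bar> + 1)"
      proof -
        have "x * q n \<le> x * \<bar>q n\<bar>" using x by (simp add: mult_left_mono)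
        also have "\<dots> \<le> c * (\<bar>\<gamma>\<bar> + 1)" using x qb by (intro mult_mono) auto
        finally show ?thesis .
      qed
      moreover have "\<gamma> * x \<le> c * (\<bar>\<gamma>\<bar> + 1)"
      proof -
        have "\<gamma> * x \<le> \<bar>\<gamma>\<bar> * x" using x by (simp add: mult_right_mono)
        also have "\<dots> \<le> (\<bar>\<gamma>\<bar> + 1) * c" using x by (intro mult_mono) auto
        finally show ?thesis by (simp add: mult.commute)
      qed
      ultimately have maxb: "exp (max (x * q n) (\<gamma> * x)) \<le> M" unfolding M_def by simp
      have EM: "?E \<le> M" unfolding M_def using \<open>x * q n \<le> _\<close> by simp
      have "\<bar>?E - ?e\<bar> \<le> exp (max (x * q n) (\<gamma> * x)) * \<bar>x * q n - \<gamma> * x\<bar>"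
        by (rule exp_diff_bound)
      also have "\<dots> \<le> M * (c * e1)"
      proof (rule mult_mono)
        have "\<bar>x * q n - \<gamma> * x\<bar> = x * \<bar>q n - \<gamma>\<bar>" proof -
          have "x * q n - \<gamma> * x = x * (q n - \<gamma>)" by (simp add: algebra_simps)
          thus ?thesis using x by (simp add: abs_mult)
        qed
        also have "\<dots> \<le> c * e1" using x elim by (intro mult_mono) auto
        finally show "\<bar>x * q n - \<gamma> * x\<bar> \<le> c * e1" .
      qed (use maxb Mpos in auto)
      also have "\<dots> \<le> M * c * (\<eta> / (2 * (M * c + 1)))"
      proof -
        have "e1 \<le> \<eta> / (2 * (M * c + 1))" unfolding e1_def by simp
        hence "M * (c * e1) \<le> M * (c * (\<eta> / (2 * (M * c + 1))))" using Mpos c by (intro mult_left_mono) auto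
        thus ?thesis by (simp add: mult.assoc)
      qed
      also have "\<dots> < \<eta> / 2"
      proof -
        have "M * c * (\<eta> / (2 * (M * c + 1))) = \<eta> / 2 * (M * c / (M * c + 1))" by (simp add: field_simps)
        also have "\<dots> < \<eta> / 2 * 1"
        proof (rule mult_strict_left_mono)
          have "M * c > 0" using Mpos c by simp
          thus "M * c / (M * c + 1) < 1" by simp
        qed (use eta in auto)
        finally show ?thesis by simp
      qed
      finally have b1: "\<bar>?E - ?e\<bar> < \<eta> / 2" .
      have "\<bar>r n - 1\<bar> * ?E \<le> \<eta> / (2 * M) * M"
        using elim EM by (intro mult_mono) auto
      hence b2: "\<bar>r n - 1\<bar> * ?E \<le> \<eta> / 2" using Mpos by simp
      have "\<bar>r n * ?E - ?e\<bar> \<le> \<bar>r n - 1\<bar> * ?E + \<bar>?E - ?e\<bar>"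
      proof -
        have "r n * ?E - ?e = (r n - 1) * ?E + (?E - ?e)" by (simp add: algebra_simps)
        hence "\<bar>r n * ?E - ?e\<bar> \<le> \<bar>(r n - 1) * ?E\<bar> + \<bar>?E - ?e\<bar>" by (metis abs_triangle_ineq)
        thus ?thesis by (simp add: abs_mult)
      qed
      with b1 b2 show "\<bar>A (exp (\<gamma> * s n)) / A 1 * exp (x * ((H (exp (\<gamma> * s n)) - H 1) / s n)) - exp (\<gamma> * x)\<bar> < \<eta>"
        unfolding r_def[symmetric] q_def[symmetric] by linarith
    qed
  qed
qed

lemma pointwise:
  fixes f :: "real \<Rightarrow> real"
  assumes fb: "\<And>y. y \<ge> 0 \<Longrightarrow> \<bar>f y\<bar> \<le> \<beta> * exp (\<alpha> * y)"
    and al: "\<alpha> > 0" and be: "\<beta> > 0"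
    and uc: "\<And>x y. x \<in> {0..c+1} \<Longrightarrow> y \<in> {0..c+1} \<Longrightarrow> \<bar>y - x\<bar> < \<delta> \<Longrightarrow> \<bar>f y - f x\<bar> < e"
    and de: "0 < \<delta>" "\<delta> \<le> 1" and la: "lam > 0" and x: "x \<in> {0..c}" and y: "y \<ge> 0" and e: "e > 0"
  shows "\<bar>f y - f x\<bar> \<le> e + 2 * \<beta> * exp (\<alpha> * c) *
           (exp (- lam * (x + \<delta>)) * exp ((\<alpha> + lam) * y) + exp (lam * (x - \<delta>)) * exp ((\<alpha> - lam) * y))"
proof -
  define T1 where "T1 = exp (- lam * (x + \<delta>)) * exp ((\<alpha> + lam) * y)"
  define T2 where "T2 = exp (lam * (x - \<delta>)) * exp ((\<alpha> - lam) * y)"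
  have T1e: "T1 = exp (\<alpha> * y) * exp (lam * (y - x - \<delta>))"
    unfolding T1_def by (simp add: exp_add[symmetric] algebra_simps)
  have T2e: "T2 = exp (\<alpha> * y) * exp (lam * (x - \<delta> - y))"
    unfolding T2_def by (simp add: exp_add[symmetric] algebra_simps)
  have T0: "T1 \<ge> 0" "T2 \<ge> 0" unfolding T1_def T2_def by auto
  have Ec1: "exp (\<alpha> * c) \<ge> 1" using al x by simp
  have far: "\<bar>f y - f x\<bar> \<le> 2 * \<beta> * exp (\<alpha> * c) * exp (\<alpha> * y)"
  proof -
    have "\<bar>f y - f x\<bar> \<le> \<bar>f y\<bar> + \<bar>f x\<bar>" by linarith
    also have "\<dots> \<le> \<beta> * exp (\<alpha> * y) + \<beta> * exp (\<alpha> * x)" using fb[of y] fb[of x] x y by auto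
    also have "\<dots> \<le> \<beta> * (exp (\<alpha> * c) * exp (\<alpha> * y)) + \<beta> * (exp (\<alpha> * c) * exp (\<alpha> * y))"
    proof (intro add_mono mult_left_mono)
      show "exp (\<alpha> * y) \<le> exp (\<alpha> * c) * exp (\<alpha> * y)" using Ec1 by simp
      have "exp (\<alpha> * x) \<le> exp (\<alpha> * c)" using x al by simp
      also have "\<dots> \<le> exp (\<alpha> * c) * exp (\<alpha> * y)" using y al by simp
      finally show "exp (\<alpha> * x) \<le> exp (\<alpha> * c) * exp (\<alpha> * y)" .
    qed (use be in auto)
    finally show ?thesis by simp
  qed
  have C0: "2 * \<beta> * exp (\<alpha> * c) \<ge> 0" using be by simp
  show ?thesis unfolding T1_def[symmetric] T2_def[symmetric]
  proof (cases "\<bar>y - x\<bar> < \<delta>")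
    case True
    hence "y \<in> {0..c+1}" using x y de by auto
    moreover have "x \<in> {0..c+1}" using x by auto
    ultimately have "\<bar>f y - f x\<bar> < e" using uc True by blast
    moreover have "2 * \<beta> * exp (\<alpha> * c) * (T1 + T2) \<ge> 0" using C0 T0 by simp
    ultimately show "\<bar>f y - f x\<bar> \<le> e + 2 * \<beta> * exp (\<alpha> * c) * (T1 + T2)" by linarith
  next
    case False
    hence "exp (\<alpha> * y) \<le> T1 + T2"
    proof (cases "y \<ge> x + \<delta>")
      case True
      hence "exp (lam * (y - x - \<delta>)) \<ge> 1" using la by simp
      hence "exp (\<alpha> * y) * 1 \<le> T1" unfolding T1e by (intro mult_left_mono) auto
      thus ?thesis using T0 by simp
    next
      case False
      with \<open>\<not> \<bar>y - x\<bar> < \<delta>\<close> have "y \<le> x - \<delta>" by linarith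
      hence "exp (lam * (x - \<delta> - y)) \<ge> 1" using la by simp
      hence "exp (\<alpha> * y) * 1 \<le> T2" unfolding T2e by (intro mult_left_mono) auto
      thus ?thesis using T0 by simp
    qed
    hence "2 * \<beta> * exp (\<alpha> * c) * exp (\<alpha> * y) \<le> 2 * \<beta> * exp (\<alpha> * c) * (T1 + T2)"
      using C0 by (intro mult_left_mono) auto
    with far e show "\<bar>f y - f x\<bar> \<le> e + 2 * \<beta> * exp (\<alpha> * c) * (T1 + T2)" by linarith
  qed
qed

lemma expk: "exp (\<gamma> * (real k / real n * bn)) = exp (\<gamma> * (bn / real n)) ^ k"
proof -
  have "\<gamma> * (real k / real n * bn) = real k * (\<gamma> * (bn / real n))" by simp
  thus ?thesis by (simp add: exp_of_nat_mult[symmetric])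
qed

lemma gf:
  fixes p :: "nat \<Rightarrow> real \<Rightarrow> real" and A H :: "real \<Rightarrow> real" and bn x \<gamma> :: real and n :: nat
  assumes gen: "(\<lambda>k. p k (real n / bn * x) * exp (\<gamma> * (bn / real n)) ^ k) sums
                   (A (exp (\<gamma> * (bn / real n))) * exp ((real n / bn * x) * H (exp (\<gamma> * (bn / real n)))))"
    and n: "n > 0" and bn: "bn > 0" and A1: "A 1 \<noteq> 0"
  shows "(\<lambda>k. exp (- (real n / bn) * x * H 1) / A 1 * p k (real n / bn * x) * exp (\<gamma> * (real k / real n * bn)))
          sums (A (exp (\<gamma> * (bn / real n))) / A 1 * exp (x * ((H (exp (\<gamma> * (bn / real n))) - H 1) / (bn / real n))))"
proof -
  define t where "t = exp (\<gamma> * (bn / real n))"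
  define u where "u = real n / bn * x"
  define C where "C = exp (- (real n / bn) * x * H 1) / A 1"
  have "(\<lambda>k. C * (p k u * t ^ k)) sums (C * (A t * exp (u * H t)))"
    using sums_mult[OF gen[folded t_def u_def]] .
  moreover have "(\<lambda>k. C * (p k u * t ^ k)) = (\<lambda>k. exp (- (real n / bn) * x * H 1) / A 1 * p k (real n / bn * x) * exp (\<gamma> * (real k / real n * bn)))"
    unfolding C_def u_def t_def by (rule ext) (simp only: expk mult.assoc)
  moreover have "C * (A t * exp (u * H t)) = A t / A 1 * exp (x * ((H t - H 1) / (bn / real n)))"
  proof -
    have "C * (A t * exp (u * H t)) = A t / A 1 * (exp (- (real n / bn) * x * H 1) * exp (u * H t))"
      unfolding C_def by simp
    also have "exp (- (real n / bn) * x * H 1) * exp (u * H t) = exp (x * ((H t - H 1) / (bn / real n)))"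
      unfolding exp_add[symmetric] u_def using n bn by (simp add: field_simps)
    finally show ?thesis .
  qed
  ultimately show ?thesis unfolding t_def by simp
qed

theorem theorem2p2:
  fixes a h :: "nat \<Rightarrow> real" and R :: real
    and p :: "nat \<Rightarrow> real \<Rightarrow> real" and b :: "nat \<Rightarrow> real"
  assumes R: "R > 1"
    and a_conv: "\<And>t. \<bar>t\<bar> < R \<Longrightarrow> summable (\<lambda>k. a k * t ^ k)"
    and h_conv: "\<And>t. \<bar>t\<bar> < R \<Longrightarrow> summable (\<lambda>k. h k * t ^ k)"
    and a0: "a 0 \<noteq> 0"
    and h0: "h 0 = 0" and h1: "h 1 \<noteq> 0"
    and gen: "\<And>x t. \<bar>t\<bar> < R \<Longrightarrow>
               (\<lambda>k. p k x * t ^ k) sums (pser a t * exp (x * pser h t))"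
    and p_nonneg: "\<And>k x. x \<ge> 0 \<Longrightarrow> p k x \<ge> 0"
    and A1: "pser a 1 \<noteq> 0"
    and H'1: "(pser h has_real_derivative 1) (at 1)"
    and b_pos: "\<And>n. b n > 0"
    and b_mono: "incseq b"
    and b_inf: "filterlim b at_top sequentially"
    and b_o: "(\<lambda>n. b n / real n) \<longlonglongrightarrow> 0"
    and f: "f \<in> CE"
    and apos: "c > 0"
  shows "uniform_limit {0..c} (\<lambda>n x. Tstar a h p b n f x) f sequentially"
proof -
  define s where "s n = b n / real n" for n
  have A1pos: "pser a 1 > 0"
  proof -
    have "(\<lambda>k. p k 0 * 1 ^ k) sums (pser a 1 * exp (0 * pser h 1))" using gen[of 1 0] R by simp
    hence "(\<lambda>k. p k 0) sums pser a 1" by simp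
    hence "0 \<le> pser a 1" using sums_le[of "\<lambda>k. 0" "\<lambda>k. p k 0" 0 "pser a 1"] sums_zero p_nonneg by simp
    with A1 show ?thesis by simp
  qed
  have Acont: "isCont (pser a) 1"
  proof -
    have "pser a = (\<lambda>t. \<Sum>k. a k * t ^ k)" by (rule ext) (simp add: pser_def)
    moreover have "isCont (\<lambda>t. \<Sum>k. a k * t ^ k) 1"
      by (rule isCont_powser[where K="(1 + R) / 2"]) (use a_conv R in auto)
    ultimately show ?thesis by simp
  qed
  have s0: "s \<longlonglongrightarrow> 0" unfolding s_def using b_o .
  have spos: "eventually (\<lambda>n. s n > 0) sequentially"
    unfolding s_def eventually_sequentially using b_pos by (intro exI[of _ 1]) auto
  from f obtain \<alpha> \<beta> where fc: "continuous_on {0..} f" and al: "\<alpha> > 0" and be: "\<beta> > 0"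
    and fb: "\<And>y. y \<ge> 0 \<Longrightarrow> \<bar>f y\<bar> \<le> \<beta> * exp (\<alpha> * y)"
    unfolding CE_def by auto
  have ucf: "uniformly_continuous_on {0..c+1} f"
    by (rule compact_uniformly_continuous) (auto intro: continuous_on_subset[OF fc])
  show ?thesis
    unfolding uniform_limit_sequentially_iff
  proof (intro allI impI)
    fix \<epsilon> :: real assume ep: "\<epsilon> > 0"
    obtain d0 where d0: "d0 > 0" and
      d0u: "\<And>x y. x \<in> {0..c+1} \<Longrightarrow> y \<in> {0..c+1} \<Longrightarrow> dist y x < d0 \<Longrightarrow> dist (f y) (f x) < \<epsilon> / 3"
      using ucf ep unfolding uniformly_continuous_on_def
      by (metis (no_types, lifting) atLeastAtMost_iff divide_pos_pos zero_less_numeral)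
    define \<delta> where "\<delta> = min d0 1"
    have de: "0 < \<delta>" "\<delta> \<le> 1" unfolding \<delta>_def using d0 by auto
    have uc: "\<And>x y. x \<in> {0..c+1} \<Longrightarrow> y \<in> {0..c+1} \<Longrightarrow> \<bar>y - x\<bar> < \<delta> \<Longrightarrow> \<bar>f y - f x\<bar> < \<epsilon> / 3"
      using d0u unfolding \<delta>_def dist_real_def by force
    define Ec where "Ec = exp (\<alpha> * c)"
    have Ec: "Ec \<ge> 1" unfolding Ec_def using al apos by simp
    define K where "K = 12 * \<beta> * Ec\<^sup>2 / \<epsilon>"
    have Kpos: "K > 0" unfolding K_def using be Ec ep by simp
    define lam where "lam = (\<bar>ln K\<bar> + 1) / \<delta>"
    have la: "lam > 0" unfolding lam_def using de by simp
    have "lam * \<delta> > ln K" unfolding lam_def using de by simp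
    hence "exp (lam * \<delta>) > exp (ln K)" by simp
    hence "exp (lam * \<delta>) > K" using Kpos by simp
    hence "exp (- (lam * \<delta>)) < 1 / K" using Kpos by (simp add: exp_minus field_simps)
    hence "4 * \<beta> * Ec\<^sup>2 * exp (- (lam * \<delta>)) < 4 * \<beta> * Ec\<^sup>2 * (1 / K)"
      using be Ec by (intro mult_strict_left_mono) auto
    also have "\<dots> = \<epsilon> / 3" unfolding K_def using be Ec ep by (simp add: field_simps)
    finally have lam_ok: "4 * \<beta> * Ec\<^sup>2 * exp (- (lam * \<delta>)) < \<epsilon> / 3" .
    define P where "P = \<beta> * Ec * exp (lam * c)"
    have Ppos: "P > 0" unfolding P_def using be Ec by simp
    define \<eta> where "\<eta> = \<epsilon> / (13 * P)"
    have eta: "\<eta> > 0" unfolding \<eta>_def using ep Ppos by simp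
    have eta_ok: "4 * P * \<eta> < \<epsilon> / 3" unfolding \<eta>_def using Ppos ep by (simp add: field_simps)
    define G where "G = \<alpha> + lam + 1"
    have E1: "eventually (\<lambda>n. n \<ge> 1) sequentially" by (simp add: eventually_ge_at_top)
    have "(\<lambda>n. exp (G * s n)) \<longlonglongrightarrow> 1"
      using tendsto_exp[OF tendsto_mult[OF tendsto_const s0, of G]] by simp
    hence E2: "eventually (\<lambda>n. exp (G * s n) < R) sequentially"
      using R by (simp add: order_tendstoD(2))
    have E3: "eventually (\<lambda>n. \<forall>x\<in>{0..c}. \<bar>pser a (exp ((\<alpha> + lam) * s n)) / pser a 1 * exp (x * ((pser h (exp ((\<alpha> + lam) * s n)) - pser h 1) / s n)) - exp ((\<alpha> + lam) * x)\<bar> < \<eta>) sequentially"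
      by (rule L_conv[OF Acont A1 H'1 s0 spos apos eta])
    have E4: "eventually (\<lambda>n. \<forall>x\<in>{0..c}. \<bar>pser a (exp ((\<alpha> - lam) * s n)) / pser a 1 * exp (x * ((pser h (exp ((\<alpha> - lam) * s n)) - pser h 1) / s n)) - exp ((\<alpha> - lam) * x)\<bar> < \<eta>) sequentially"
      by (rule L_conv[OF Acont A1 H'1 s0 spos apos eta])
    have "eventually (\<lambda>n. \<forall>x\<in>{0..c}. dist (Tstar a h p b n f x) (f x) < \<epsilon>) sequentially"
      using E1 E2 E3 E4
    proof eventually_elim
      case (elim n)
      have n: "n > 0" using elim by simp
      have bn: "b n > 0" by (rule b_pos)
      have sn: "s n > 0" unfolding s_def using n bn by simp
      show ?case
      proof
        fix x assume x: "x \<in> {0..c}"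
        define u where "u = real n / b n * x"
        have u: "u \<ge> 0" unfolding u_def using x bn by simp
        define W where "W k = exp (- (real n / b n) * x * pser h 1) / pser a 1 * p k u" for k
        have W0: "W k \<ge> 0" for k unfolding W_def using p_nonneg[OF u] A1pos by simp
        define L where "L \<gamma> = pser a (exp (\<gamma> * s n)) / pser a 1 * exp (x * ((pser h (exp (\<gamma> * s n)) - pser h 1) / s n))" for \<gamma>
        have gfs: "(\<lambda>k. W k * exp (\<gamma> * (real k / real n * b n))) sums L \<gamma>" if g: "\<gamma> \<le> G" for \<gamma>
        proof -
          have "exp (\<gamma> * s n) \<le> exp (G * s n)" using g sn by (simp add: mult_right_mono)
          hence "exp (\<gamma> * s n) < R" using elim(2) by linarith
          hence "\<bar>exp (\<gamma> * (b n / real n))\<bar> < R" by (simp add: s_def)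
          from gf[where p=p and x=x and \<gamma>=\<gamma> and n=n and bn="b n" and A="pser a" and H="pser h", OF gen[OF this] n bn A1]
          show ?thesis unfolding W_def L_def s_def u_def by simp
        qed
        have G1: "\<alpha> + lam \<le> G" "\<alpha> - lam \<le> G" "\<alpha> \<le> G" "0 \<le> G" unfolding G_def using al la by auto
        have S0: "W sums 1"
          using gfs[OF G1(4)] unfolding L_def using A1 by simp
        have Sp: "(\<lambda>k. W k * exp ((\<alpha> + lam) * (real k / real n * b n))) sums L (\<alpha> + lam)" by (rule gfs[OF G1(1)])
        have Sm: "(\<lambda>k. W k * exp ((\<alpha> - lam) * (real k / real n * b n))) sums L (\<alpha> - lam)" by (rule gfs[OF G1(2)])
        have Sa: "(\<lambda>k. W k * exp (\<alpha> * (real k / real n * b n))) sums L \<alpha>" by (rule gfs[OF G1(3)])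
        have ks: "real k / real n * b n \<ge> 0" for k using bn by simp
        have sumWF: "summable (\<lambda>k. W k * f (real k / real n * b n))"
        proof (rule summable_comparison_test'[where N=0])
          show "summable (\<lambda>k. \<beta> * (W k * exp (\<alpha> * (real k / real n * b n))))"
            using summable_mult[OF sums_summable[OF Sa]] .
          fix k :: nat
          have "norm (W k * f (real k / real n * b n)) = W k * \<bar>f (real k / real n * b n)\<bar>"
            using W0[of k] by (simp add: abs_mult)
          also have "\<dots> \<le> W k * (\<beta> * exp (\<alpha> * (real k / real n * b n)))"
            using fb[OF ks[of k]] W0[of k] by (intro mult_left_mono) auto
          finally show "norm (W k * f (real k / real n * b n)) \<le> \<beta> * (W k * exp (\<alpha> * (real k / real n * b n)))"
            by (simp add: algebra_simps)
        qed
        define C where "C = exp (- (real n / b n) * x * pser h 1) / pser a 1"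
        have WC: "W = (\<lambda>k. C * p k u)" unfolding W_def C_def by (rule ext) simp
        have C0: "C > 0" unfolding C_def using A1pos by simp
        have sumPF: "summable (\<lambda>k. p k u * f (real k / real n * b n))"
        proof -
          have "summable (\<lambda>k. (1 / C) * (W k * f (real k / real n * b n)))"
            using summable_mult[OF sumWF] .
          moreover have "(\<lambda>k. (1 / C) * (W k * f (real k / real n * b n))) = (\<lambda>k. p k u * f (real k / real n * b n))"
            unfolding WC using C0 by (rule_tac ext) simp
          ultimately show ?thesis by metis
        qed
        have Teq: "Tstar a h p b n f x = (\<Sum>k. W k * f (real k / real n * b n))"
        proof -
          have "Tstar a h p b n f x = C * (\<Sum>k. p k u * f (real k / real n * b n))"
            unfolding Tstar_def C_def u_def by simp
          also have "\<dots> = (\<Sum>k. C * (p k u * f (real k / real n * b n)))"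
            using suminf_mult[OF sumPF] by simp
          finally show ?thesis unfolding WC by (simp add: mult.assoc)
        qed
        define D where "D k = W k * f (real k / real n * b n) - W k * f x" for k
        have SfX: "(\<lambda>k. W k * f x) sums f x" using sums_mult2[OF S0, of "f x"] by simp
        have sumD: "summable D" unfolding D_def
          using summable_diff[OF sumWF sums_summable[OF SfX]] .
        have TD: "Tstar a h p b n f x - f x = (\<Sum>k. D k)"
          unfolding Teq D_def using suminf_diff[OF sumWF sums_summable[OF SfX]] sums_unique[OF SfX] by simp
        define c1 where "c1 = 2 * \<beta> * Ec * exp (- lam * (x + \<delta>))"
        define c2 where "c2 = 2 * \<beta> * Ec * exp (lam * (x - \<delta>))"
        define B where "B k = W k * (\<epsilon> / 3) + c1 * (W k * exp ((\<alpha> + lam) * (real k / real n * b n)))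
                            + c2 * (W k * exp ((\<alpha> - lam) * (real k / real n * b n)))" for k
        have SB: "B sums (1 * (\<epsilon> / 3) + c1 * L (\<alpha> + lam) + c2 * L (\<alpha> - lam))"
          unfolding B_def by (intro sums_add sums_mult sums_mult2 S0 Sp Sm)
        have DB: "\<bar>D k\<bar> \<le> B k" for k
        proof -
          have "\<bar>D k\<bar> = W k * \<bar>f (real k / real n * b n) - f x\<bar>"
            unfolding D_def using W0[of k] by (simp add: abs_mult flip: right_diff_distrib)
          also have "\<dots> \<le> W k * (\<epsilon> / 3 + 2 * \<beta> * exp (\<alpha> * c) *
             (exp (- lam * (x + \<delta>)) * exp ((\<alpha> + lam) * (real k / real n * b n)) + exp (lam * (x - \<delta>)) * exp ((\<alpha> - lam) * (real k / real n * b n))))"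
            using pointwise[OF fb al be uc de la x ks[of k]] ep W0[of k]
            by (intro mult_left_mono) auto
          also have "\<dots> = B k" unfolding B_def c1_def c2_def Ec_def by (simp add: algebra_simps)
          finally show ?thesis .
        qed
        have "\<bar>\<Sum>k. D k\<bar> \<le> (\<Sum>k. B k)"
        proof -
          have "(\<Sum>k. D k) \<le> (\<Sum>k. B k)" using DB sumD sums_summable[OF SB]
            by (intro suminf_le) (auto simp: abs_le_iff)
          moreover have "(\<Sum>k. - B k) \<le> (\<Sum>k. D k)" using DB sumD summable_minus[OF sums_summable[OF SB]]
            by (intro suminf_le) (auto simp: abs_le_iff, smt (verit))
          moreover have "(\<Sum>k. - B k) = - (\<Sum>k. B k)" by (rule suminf_minus[OF sums_summable[OF SB]])
          ultimately show ?thesis by linarith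
        qed
        also have "(\<Sum>k. B k) = \<epsilon> / 3 + c1 * L (\<alpha> + lam) + c2 * L (\<alpha> - lam)"
          using sums_unique[OF SB] by simp
        also have "\<dots> < \<epsilon>"
        proof -
          have "\<bar>L (\<alpha> + lam) - exp ((\<alpha> + lam) * x)\<bar> < \<eta>" using elim(3) x unfolding L_def by blast
          hence L1: "L (\<alpha> + lam) < exp ((\<alpha> + lam) * x) + \<eta>" by linarith
          have "\<bar>L (\<alpha> - lam) - exp ((\<alpha> - lam) * x)\<bar> < \<eta>" using elim(4) x unfolding L_def by blast
          hence L2: "L (\<alpha> - lam) < exp ((\<alpha> - lam) * x) + \<eta>" by linarith
          have c1p: "c1 > 0" and c2p: "c2 > 0" unfolding c1_def c2_def using be Ec by auto
          have "c1 * L (\<alpha> + lam) \<le> c1 * (exp ((\<alpha> + lam) * x) + \<eta>)" using L1 c1p by simp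
          also have "\<dots> = 2 * \<beta> * Ec * exp (\<alpha> * x - lam * \<delta>) + 2 * \<beta> * Ec * \<eta> * exp (- lam * (x + \<delta>))"
          proof -
            have e: "- lam * (x + \<delta>) + (\<alpha> + lam) * x = \<alpha> * x - lam * \<delta>" by algebra
            have ee: "exp (- lam * (x + \<delta>)) * exp ((\<alpha> + lam) * x) = exp (\<alpha> * x - lam * \<delta>)"
              by (simp only: exp_add[symmetric] e)
            have "c1 * (exp ((\<alpha> + lam) * x) + \<eta>) = 2 * \<beta> * Ec * (exp (- lam * (x + \<delta>)) * exp ((\<alpha> + lam) * x)) + 2 * \<beta> * Ec * \<eta> * exp (- lam * (x + \<delta>))"
              unfolding c1_def by (simp add: algebra_simps)
            thus ?thesis by (simp only: ee)
          qed
          also have "\<dots> \<le> 2 * \<beta> * Ec * (Ec * exp (- (lam * \<delta>))) + 2 * \<beta> * Ec * \<eta> * exp (lam * c)"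
          proof (intro add_mono mult_left_mono)
            have "exp (\<alpha> * x - lam * \<delta>) = exp (\<alpha> * x) * exp (- (lam * \<delta>))" by (simp add: exp_add[symmetric])
            also have "\<dots> \<le> Ec * exp (- (lam * \<delta>))" unfolding Ec_def using x al by simp
            finally show "exp (\<alpha> * x - lam * \<delta>) \<le> Ec * exp (- (lam * \<delta>))" .
            have "lam * (x + \<delta>) \<ge> 0" "lam * c \<ge> 0" using x la de apos by auto
            thus "exp (- lam * (x + \<delta>)) \<le> exp (lam * c)" by simp
          qed (use be Ec eta in auto)
          finally have t1: "c1 * L (\<alpha> + lam) \<le> 2 * \<beta> * Ec\<^sup>2 * exp (- (lam * \<delta>)) + 2 * P * \<eta>"
            unfolding P_def by (simp add: power2_eq_square algebra_simps)
          have "c2 * L (\<alpha> - lam) \<le> c2 * (exp ((\<alpha> - lam) * x) + \<eta>)" using L2 c2p by simp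
          also have "\<dots> = 2 * \<beta> * Ec * exp (\<alpha> * x - lam * \<delta>) + 2 * \<beta> * Ec * \<eta> * exp (lam * (x - \<delta>))"
          proof -
            have e: "lam * (x - \<delta>) + (\<alpha> - lam) * x = \<alpha> * x - lam * \<delta>" by algebra
            have ee: "exp (lam * (x - \<delta>)) * exp ((\<alpha> - lam) * x) = exp (\<alpha> * x - lam * \<delta>)"
              by (simp only: exp_add[symmetric] e)
            have "c2 * (exp ((\<alpha> - lam) * x) + \<eta>) = 2 * \<beta> * Ec * (exp (lam * (x - \<delta>)) * exp ((\<alpha> - lam) * x)) + 2 * \<beta> * Ec * \<eta> * exp (lam * (x - \<delta>))"
              unfolding c2_def by (simp add: algebra_simps)
            thus ?thesis by (simp only: ee)
          qed
          also have "\<dots> \<le> 2 * \<beta> * Ec * (Ec * exp (- (lam * \<delta>))) + 2 * \<beta> * Ec * \<eta> * exp (lam * c)"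
          proof (intro add_mono mult_left_mono)
            have "exp (\<alpha> * x - lam * \<delta>) = exp (\<alpha> * x) * exp (- (lam * \<delta>))" by (simp add: exp_add[symmetric])
            also have "\<dots> \<le> Ec * exp (- (lam * \<delta>))" unfolding Ec_def using x al by simp
            finally show "exp (\<alpha> * x - lam * \<delta>) \<le> Ec * exp (- (lam * \<delta>))" .
            show "exp (lam * (x - \<delta>)) \<le> exp (lam * c)" using x la de by simp
          qed (use be Ec eta in auto)
          finally have t2: "c2 * L (\<alpha> - lam) \<le> 2 * \<beta> * Ec\<^sup>2 * exp (- (lam * \<delta>)) + 2 * P * \<eta>"
            unfolding P_def by (simp add: power2_eq_square algebra_simps)
          show ?thesis using t1 t2 lam_ok eta_ok by linarith
        qed
        finally show "dist (Tstar a h p b n f x) (f x) < \<epsilon>"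
          unfolding dist_real_def TD by simp
      qed
    qed
    thus "\<exists>N. \<forall>n\<ge>N. \<forall>x\<in>{0..c}. dist (Tstar a h p b n f x) (f x) < \<epsilon>"
      unfolding eventually_sequentially .
  qed
qed

end
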